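(* Let $d\ge3$ and let $T$ be the infinite $d$-regular tree with origin $o$. Index rotor directions as follows: at each vertex $v\neq o$ the neighbors of $v$ are labeled $1,\dots,d$ with label $d$ assigned to the parent of $v$ (its neighbor closer to $o$), and at $o$ the $d$ neighbors are labeled $1,\dots,d$ arbitrarily; a rotor pointing in direction $i$ advances to direction $i+1$ (with $d+1$ read as $1$). If initially every rotor points in direction $d-1$, then every chip in an infinite succession of chips started at $o$ (each performing rotor-router walk until it returns to $o$, rotors not reset) returns to $o$ in finitely many steps.
   Context: Rotor-router walk: a chip at vertex $v$ first advances the rotor at $v$ to the next direction and then moves to the neighbor in that direction. *)

theory Defs
  imports Main
begin

text \<open>Vertices of the infinite d-regular tree T_d are encoded as lists of labels:
  the origin o is [], the neighbour of o in direction i (1 \<le> i \<le> d) is [i], and for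
  v \<noteq> o the neighbour of v in direction i < d is v @ [i] (a child), while direction d
  is the parent butlast v.  Reachable vertices are exactly the lists whose first
  entry lies in {1..d} and whose further entries lie in {1..d-1}.\<close>

type_synonym vertex = "nat list"

definition origin :: vertex where "origin = []"

definition nbr :: "nat \<Rightarrow> vertex \<Rightarrow> nat \<Rightarrow> vertex" where
  "nbr d v i = (if v = [] then [i] else if i = d then butlast v else v @ [i])"

definition next_dir :: "nat \<Rightarrow> nat \<Rightarrow> nat" where
  "next_dir d i = (if i = d then 1 else i + 1)"

type_synonym rotors = "vertex \<Rightarrow> nat"

definition rr_step :: "nat \<Rightarrow> vertex \<times> rotors \<Rightarrow> vertex \<times> rotors" where
  "rr_step d s = (let v = fst s; \<rho> = snd s; \<rho>' = \<rho>(v := next_dir d (\<rho> v))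
                  in (nbr d v (\<rho>' v), \<rho>'))"

definition init_rotors :: "nat \<Rightarrow> rotors" where
  "init_rotors d = (\<lambda>v. d - 1)"

definition return_time :: "nat \<Rightarrow> rotors \<Rightarrow> nat" where
  "return_time d \<rho> = (LEAST t. 0 < t \<and> fst ((rr_step d ^^ t) (origin, \<rho>)) = origin)"

fun chip_rotors :: "nat \<Rightarrow> nat \<Rightarrow> rotors" where
  "chip_rotors d 0 = init_rotors d"
| "chip_rotors d (Suc n) =
     snd ((rr_step d ^^ return_time d (chip_rotors d n)) (origin, chip_rotors d n))"

end

theory Submission
  imports Defs
begin

lemma rr_step_eq: "rr_step d (v,\<rho>) = (nbr d v (next_dir d (\<rho> v)), \<rho>(v := next_dir d (\<rho> v)))"
  by (simp add: rr_step_def Let_def)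

definition good :: "nat \<Rightarrow> nat \<Rightarrow> vertex \<Rightarrow> rotors \<Rightarrow> bool" where
  "good d k v \<rho> \<longleftrightarrow> (\<forall>u. set u \<subseteq> {1..<d} \<longrightarrow> \<rho> (v@u) = (if length u < k then d else d-1))"

lemma compose:
  assumes "(f^^a) x = y" "\<forall>s<a. R (fst ((f^^s) x))" "\<forall>s<b. R (fst ((f^^s) y))"
  shows "(\<forall>s<b+a. R (fst ((f^^s) x))) \<and> (f^^(b+a)) x = (f^^b) y"
proof
  show "\<forall>s<b+a. R (fst ((f^^s) x))"
  proof (intro allI impI)
    fix s assume s: "s < b + a"
    show "R (fst ((f^^s) x))"
    proof (cases "s < a")
      case True then show ?thesis using assms(2) by blast
    next
      case False
      then have "s = (s-a)+a" by simp
      then have "(f^^s) x = (f^^(s-a)) y" using assms(1) by (metis funpow_add comp_apply)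
      then show ?thesis using assms(3) s False by auto
    qed
  qed
  show "(f^^(b+a)) x = (f^^b) y" using assms(1) by (simp add: funpow_add)
qed

lemma excursion:
  assumes d3: "d \<ge> 3"
  shows "v \<noteq> [] \<Longrightarrow> good d k v \<rho> \<Longrightarrow> \<exists>t \<rho>'. 0<t \<and> (rr_step d ^^ t) (v,\<rho>) = (butlast v, \<rho>')
     \<and> good d (Suc k) v \<rho>' \<and> (\<forall>w. (\<forall>u. w \<noteq> v@u) \<longrightarrow> \<rho>' w = \<rho> w)
     \<and> (\<forall>s<t. \<exists>u. fst ((rr_step d ^^ s) (v,\<rho>)) = v@u)"
proof (induction k arbitrary: v \<rho>)
  case 0
  have rv: "\<rho> v = d-1" using 0(2) unfolding good_def by (metis append_Nil2 empty_subsetI list.set(1) list.size(3) less_irrefl)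
  have nd: "next_dir d (d-1) = d" using d3 by (simp add: next_dir_def)
  have step: "(rr_step d ^^ 1)(v,\<rho>) = (butlast v, \<rho>(v := d))"
    using 0(1) rv nd by (simp add: rr_step_eq nbr_def)
  have g: "good d 1 v (\<rho>(v := d))"
    unfolding good_def
  proof (intro allI impI)
    fix u :: "nat list" assume su: "set u \<subseteq> {1..<d}"
    show "(\<rho>(v := d)) (v@u) = (if length u < 1 then d else d-1)"
    proof (cases u)
      case Nil then show ?thesis by simp
    next
      case (Cons a l)
      then have "\<rho> (v@u) = d-1" using 0(2) su unfolding good_def by auto
      then show ?thesis using Cons by simp
    qed
  qed
  show ?case
  proof (rule exI[of _ 1], rule exI[of _ "\<rho>(v := d)"], intro conjI allI impI)
    show "(rr_step d ^^ 1) (v, \<rho>) = (butlast v, \<rho>(v := d))" by (rule step)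
    show "good d (Suc 0) v (\<rho>(v := d))" using g by simp
  next
    fix w assume "\<forall>u. w \<noteq> v@u"
    then have "w \<noteq> v" by (metis append_Nil2)
    then show "(\<rho>(v := d)) w = \<rho> w" by simp
  next
    fix s :: nat assume "s < 1"
    then show "\<exists>u. fst ((rr_step d ^^ s) (v, \<rho>)) = v @ u" by (auto intro: exI[of _ "[]"])
  qed simp
next
  case (Suc k)
  note outerIH = Suc.IH
  have rv: "\<rho> v = d" using Suc(3) unfolding good_def by (metis append_Nil2 empty_subsetI list.set(1) list.size(3) zero_less_Suc)
  have P: "\<And>j. j \<le> d-1 \<Longrightarrow> \<exists>t \<rho>j. (rr_step d ^^ t)(v,\<rho>) = (v,\<rho>j) \<and> \<rho>j v = (if j=0 then d else j)
     \<and> (\<forall>w. (\<forall>u. w \<noteq> v@u) \<longrightarrow> \<rho>j w = \<rho> w) \<and> (\<forall>s<t. \<exists>u. fst ((rr_step d ^^ s) (v,\<rho>)) = v@u)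
     \<and> (\<forall>c u. c \<in> {1..<d} \<longrightarrow> set u \<subseteq> {1..<d} \<longrightarrow>
          \<rho>j (v@c#u) = (if length u < (if c \<le> j then Suc k else k) then d else d-1))"
  proof -
    fix j :: nat assume "j \<le> d-1"
    then show "?thesis j"
    proof (induction j)
      case 0
      show ?case
      proof (rule exI[of _ 0], rule exI[of _ \<rho>], intro conjI allI impI)
        fix c u assume c: "c \<in> {1..<d}" and su: "set u \<subseteq> {1..<d}"
        have "set (c#u) \<subseteq> {1..<d}" using c su by auto
        then have "\<rho> (v@(c#u)) = (if length (c#u) < Suc k then d else d-1)"
          using Suc(3) unfolding good_def by blast
        then show "\<rho> (v@c#u) = (if length u < (if c \<le> 0 then Suc k else k) then d else d-1)"
          using c by simp
      qed (auto simp: rv)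
    next
      case (Suc j)
      obtain t \<rho>j where A: "(rr_step d ^^ t)(v,\<rho>) = (v,\<rho>j)" and B: "\<rho>j v = (if j=0 then d else j)"
        and C: "\<forall>w. (\<forall>u. w \<noteq> v@u) \<longrightarrow> \<rho>j w = \<rho> w"
        and D: "\<forall>s<t. \<exists>u. fst ((rr_step d ^^ s) (v,\<rho>)) = v@u"
        and E: "\<forall>c u. c \<in> {1..<d} \<longrightarrow> set u \<subseteq> {1..<d} \<longrightarrow>
          \<rho>j (v@c#u) = (if length u < (if c \<le> j then Suc k else k) then d else d-1)"
        using Suc.IH Suc.prems by auto
      have nd: "next_dir d (\<rho>j v) = Suc j" using B Suc.prems d3 by (auto simp: next_dir_def)
      define \<rho>1 where "\<rho>1 = \<rho>j(v := Suc j)"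
      have st: "(rr_step d ^^ 1)(v,\<rho>j) = (v@[Suc j], \<rho>1)"
        using nd Suc.prems d3 \<open>v \<noteq> []\<close> by (auto simp add: rr_step_eq nbr_def \<rho>1_def)
      have g1: "good d k (v@[Suc j]) \<rho>1"
        unfolding good_def
      proof (intro allI impI)
        fix u :: "nat list" assume su: "set u \<subseteq> {1..<d}"
        have "\<rho>1 (v@[Suc j]@u) = \<rho>j (v@Suc j#u)" by (simp add: \<rho>1_def)
        also have "\<dots> = (if length u < k then d else d-1)"
          using E su Suc.prems d3 by auto
        finally show "\<rho>1 ((v@[Suc j])@u) = (if length u < k then d else d-1)" by simp
      qed
      obtain t2 \<rho>2 where A2: "(rr_step d ^^ t2) (v@[Suc j],\<rho>1) = (v, \<rho>2)"
        and G2: "good d (Suc k) (v@[Suc j]) \<rho>2"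
        and C2: "\<forall>w. (\<forall>u. w \<noteq> (v@[Suc j])@u) \<longrightarrow> \<rho>2 w = \<rho>1 w"
        and D2: "\<forall>s<t2. \<exists>u. fst ((rr_step d ^^ s) (v@[Suc j],\<rho>1)) = (v@[Suc j])@u"
        using outerIH[of "v@[Suc j]" \<rho>1] g1 by auto
      have D2': "\<forall>s<t2. \<exists>u. fst ((rr_step d ^^ s) (v@[Suc j],\<rho>1)) = v@u"
        using D2 by (metis append_assoc)
      have D1: "\<forall>s<1. \<exists>u. fst ((rr_step d ^^ s) (v,\<rho>j)) = v@u" by (intro allI impI exI[of _ "[]"]) simp
      from compose[OF A D D1] have X: "(\<forall>s<1+t. \<exists>u. fst ((rr_step d ^^ s) (v,\<rho>)) = v@u)"
        and Y: "(rr_step d ^^ (1+t)) (v,\<rho>) = (v@[Suc j], \<rho>1)" using st by auto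
      from compose[OF Y X D2'] A2 have X2: "(\<forall>s<t2+(1+t). \<exists>u. fst ((rr_step d ^^ s) (v,\<rho>)) = v@u)"
        and Y2: "(rr_step d ^^ (t2+(1+t))) (v,\<rho>) = (v, \<rho>2)" by auto
      have nv: "\<And>u. v \<noteq> (v@[Suc j])@u" by simp
      show ?case
      proof (rule exI[of _ "t2+(1+t)"], rule exI[of _ \<rho>2], intro conjI allI impI)
        show "\<rho>2 v = (if Suc j = 0 then d else Suc j)" using C2 nv by (simp add: \<rho>1_def)
      next
        fix w assume "\<forall>u. w \<noteq> v@u"
        then show "\<rho>2 w = \<rho> w" using C2 C by (auto simp: \<rho>1_def)
      next
        fix c u assume c: "c \<in> {1..<d}" and su: "set u \<subseteq> {1..<d}"
        show "\<rho>2 (v@c#u) = (if length u < (if c \<le> Suc j then Suc k else k) then d else d-1)"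
        proof (cases "c = Suc j")
          case True
          then show ?thesis using G2 su unfolding good_def by auto
        next
          case False
          then have "\<forall>u'. v@c#u \<noteq> (v@[Suc j])@u'" by simp
          then have "\<rho>2 (v@c#u) = \<rho>j (v@c#u)" using C2 by (simp add: \<rho>1_def)
          then show ?thesis using E c su False by (auto simp: le_Suc_eq)
        qed
      qed (use Y2 X2 in auto)
    qed
  qed
  obtain t \<rho>j where A: "(rr_step d ^^ t)(v,\<rho>) = (v,\<rho>j)" and B0: "\<rho>j v = (if d-1=0 then d else d-1)"
    and C: "\<forall>w. (\<forall>u. w \<noteq> v@u) \<longrightarrow> \<rho>j w = \<rho> w"
    and D: "\<forall>s<t. \<exists>u. fst ((rr_step d ^^ s) (v,\<rho>)) = v@u"
    and E0: "\<forall>c u. c \<in> {1..<d} \<longrightarrow> set u \<subseteq> {1..<d} \<longrightarrow>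
          \<rho>j (v@c#u) = (if length u < (if c \<le> d-1 then Suc k else k) then d else d-1)"
    using P[of "d-1"] by blast
  have B: "\<rho>j v = d - 1" using B0 d3 by simp
  have E: "\<forall>c u. c \<in> {1..<d} \<longrightarrow> set u \<subseteq> {1..<d} \<longrightarrow>
          \<rho>j (v@c#u) = (if length u < Suc k then d else d-1)"
  proof (intro allI impI)
    fix c u assume "c \<in> {1..<d}" "set (u::nat list) \<subseteq> {1..<d}"
    moreover then have "c \<le> d-1" by auto
    ultimately show "\<rho>j (v@c#u) = (if length u < Suc k then d else d-1)" using E0 by simp
  qed
  have nd: "next_dir d (d-1) = d" using d3 by (simp add: next_dir_def)
  have st: "(rr_step d ^^ 1)(v,\<rho>j) = (butlast v, \<rho>j(v := d))"
    using Suc(2) B nd by (simp add: rr_step_eq nbr_def)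
  have D1: "\<forall>s<1. \<exists>u. fst ((rr_step d ^^ s) (v,\<rho>j)) = v@u" by (intro allI impI exI[of _ "[]"]) simp
  from compose[OF A D D1] st have X: "(\<forall>s<1+t. \<exists>u. fst ((rr_step d ^^ s) (v,\<rho>)) = v@u)"
    and Y: "(rr_step d ^^ (1+t)) (v,\<rho>) = (butlast v, \<rho>j(v := d))" by auto
  have g: "good d (Suc (Suc k)) v (\<rho>j(v := d))"
    unfolding good_def
  proof (intro allI impI)
    fix u :: "nat list" assume su: "set u \<subseteq> {1..<d}"
    show "(\<rho>j(v := d)) (v@u) = (if length u < Suc (Suc k) then d else d-1)"
    proof (cases u)
      case Nil then show ?thesis by simp
    next
      case (Cons c l)
      then show ?thesis using E su by auto
    qed
  qed
  show ?case
  proof (rule exI[of _ "1+t"], rule exI[of _ "\<rho>j(v := d)"], intro conjI allI impI)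
    fix w assume "\<forall>u. w \<noteq> v@u"
    moreover then have "w \<noteq> v" by (metis append_Nil2)
    ultimately show "(\<rho>j(v := d)) w = \<rho> w" using C by simp
  next
    show "0 < 1+t" by simp
  next
    show "(rr_step d ^^ (1+t)) (v,\<rho>) = (butlast v, \<rho>j(v:=d))" by (rule Y)
  next
    show "good d (Suc (Suc k)) v (\<rho>j(v:=d))" by (rule g)
  next
    fix s assume "s < 1+t"
    then show "\<exists>u. fst ((rr_step d ^^ s) (v, \<rho>)) = v @ u" using X by blast
  qed
qed


definition Inv :: "nat \<Rightarrow> rotors \<Rightarrow> bool" where
  "Inv d \<rho> \<longleftrightarrow> (\<forall>i. \<exists>k. good d k [i] \<rho>)"

lemma chip:
  assumes d3: "d \<ge> 3" and I: "Inv d \<rho>"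
  shows "0 < return_time d \<rho> \<and> fst ((rr_step d ^^ return_time d \<rho>) ([],\<rho>)) = []
     \<and> Inv d (snd ((rr_step d ^^ return_time d \<rho>) ([],\<rho>)))"
proof -
  define r where "r = next_dir d (\<rho> [])"
  define \<rho>1 where "\<rho>1 = \<rho>([] := r)"
  have st: "(rr_step d ^^ 1)([],\<rho>) = ([r], \<rho>1)"
    by (simp add: rr_step_eq nbr_def r_def \<rho>1_def)
  obtain k where gk: "good d k [r] \<rho>" using I unfolding Inv_def by blast
  have g1: "good d k [r] \<rho>1" using gk unfolding good_def \<rho>1_def by simp
  obtain t \<rho>' where t0: "0 < t" and A: "(rr_step d ^^ t) ([r],\<rho>1) = (butlast [r], \<rho>')"
    and G: "good d (Suc k) [r] \<rho>'" and C: "\<forall>w. (\<forall>u. w \<noteq> [r]@u) \<longrightarrow> \<rho>' w = \<rho>1 w"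
    and D: "\<forall>s<t. \<exists>u. fst ((rr_step d ^^ s) ([r],\<rho>1)) = [r]@u"
    using excursion[OF d3, of "[r]" k \<rho>1] g1 by auto
  have shift: "\<And>s. (rr_step d ^^ (s + 1)) ([],\<rho>) = (rr_step d ^^ s) ([r],\<rho>1)"
  proof -
    fix s
    have "(rr_step d ^^ (s + 1)) ([],\<rho>) = (rr_step d ^^ s) ((rr_step d ^^ 1) ([],\<rho>))"
      by (simp only: funpow_add o_apply)
    then show "(rr_step d ^^ (s + 1)) ([],\<rho>) = (rr_step d ^^ s) ([r],\<rho>1)" using st by simp
  qed
  have fin: "(rr_step d ^^ (t+1)) ([],\<rho>) = ([], \<rho>')" using shift A by simp
  have notret: "\<And>s. 0 < s \<Longrightarrow> s < t+1 \<Longrightarrow> fst ((rr_step d ^^ s) ([],\<rho>)) \<noteq> []"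
  proof -
    fix s :: nat assume "0 < s" "s < t+1"
    then have "s = (s-1)+1" "s-1 < t" by auto
    then have "(rr_step d ^^ s) ([],\<rho>) = (rr_step d ^^ (s-1)) ([r],\<rho>1)" using shift by metis
    then show "fst ((rr_step d ^^ s) ([],\<rho>)) \<noteq> []" using D \<open>s-1 < t\<close> by force
  qed
  have rt: "return_time d \<rho> = t+1"
    unfolding return_time_def origin_def
  proof (rule Least_equality)
    show "0 < t+1 \<and> fst ((rr_step d ^^ (t+1)) ([], \<rho>)) = []" using fin by simp
  next
    fix y assume "0 < y \<and> fst ((rr_step d ^^ y) ([], \<rho>)) = []"
    then show "t+1 \<le> y" using notret by (meson not_le)
  qed
  have inv': "Inv d \<rho>'"
    unfolding Inv_def
  proof
    fix i
    show "\<exists>k. good d k [i] \<rho>'"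
    proof (cases "i = r")
      case True then show ?thesis using G by blast
    next
      case False
      obtain ki where "good d ki [i] \<rho>" using I unfolding Inv_def by blast
      moreover have "\<And>u. \<rho>' ([i]@u) = \<rho> ([i]@u)"
        using C False by (simp add: \<rho>1_def)
      ultimately have "good d ki [i] \<rho>'" unfolding good_def by simp
      then show ?thesis by blast
    qed
  qed
  show ?thesis using rt fin inv' by simp
qed

theorem mainTheorem10:
  fixes d :: nat
  assumes "d \<ge> 3"
  shows "\<forall>n. \<exists>t>0. fst ((rr_step d ^^ t) (origin, chip_rotors d n)) = origin"
proof -
  have inv: "Inv d (chip_rotors d n)" for n
  proof (induction n)
    case 0
    show ?case by (auto simp: Inv_def good_def init_rotors_def intro!: exI[of _ 0])
  next
    case (Suc n)
    then show ?case using chip[OF assms] by (simp add: origin_def)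
  qed
  show ?thesis
  proof
    fix n
    show "\<exists>t>0. fst ((rr_step d ^^ t) (origin, chip_rotors d n)) = origin"
      using chip[OF assms inv[of n]] unfolding origin_def by blast
  qed
qed

end
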